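(* Let $T$ be a perfect binary tree with nonnegative node weights $(x_v)$, let $1\le k\le K$ be integers, $\epsilon>0$, and fix a level $\ell$ of $T$ containing at least $M=\lceil(1+\epsilon)K/\epsilon\rceil$ nodes. For each node $v$ let $T_v$ be the set of descendants of $v$ (including $v$) and $u_v=\sum_{w\in T_v}x_w$. Let $u$ be the $M$-th largest value among $\{u_v: v \text{ at level }\ell\}$ (with multiplicity), let $D=\{v \text{ at level } \ell: u_v<u\}$ and $Z=\bigcup_{v\in D}T_v$. Let $\mathrm{OPT}=\min_{\Omega\in\mathbb{T}_k}\sum_{w\notin\Omega}x_w$ and $\check{\mathrm{OPT}}=\min\{\sum_{w\notin\Omega}x_w:\Omega\in\mathbb{T}_k,\ \Omega\cap Z=\emptyset\}$. Then $\check{\mathrm{OPT}}\le(1+\epsilon)\mathrm{OPT}$.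
   Context: $\mathbb{T}_k$ denotes the family of node sets $\Omega\subseteq T$ that contain the root, are closed under taking parents, and satisfy $|\Omega|\le k$. The level of a node is counted from the leaves (leaves are at level 1); all nodes at a given level have the same number of descendants. *)

theory Defs
  imports Complex_Main "HOL-Library.Multiset"
begin

text \<open>Perfect binary tree of height h: nodes are root-to-node paths (bool lists) of
length < h. The root is [], the children of v are v@[False], v@[True]; the parent
of v@[b] is v. Leaves have length h-1.\<close>

definition tree_nodes :: "nat \<Rightarrow> bool list set" where
  "tree_nodes h = {v. length v < h}"

text \<open>Level counted from the leaves: leaves are at level 1, the root at level h.\<close>
definition level :: "nat \<Rightarrow> bool list \<Rightarrow> nat" where
  "level h v = h - length v"

definition level_nodes :: "nat \<Rightarrow> nat \<Rightarrow> bool list set" where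
  "level_nodes h l = {v \<in> tree_nodes h. level h v = l}"

definition descendants :: "nat \<Rightarrow> bool list \<Rightarrow> bool list set" where
  "descendants h v = {w \<in> tree_nodes h. \<exists>r. w = v @ r}"

definition rooted_subtrees :: "nat \<Rightarrow> nat \<Rightarrow> bool list set set" where
  "rooted_subtrees h k = {\<Omega>. \<Omega> \<subseteq> tree_nodes h \<and> [] \<in> \<Omega>
      \<and> (\<forall>v b. v @ [b] \<in> \<Omega> \<longrightarrow> v \<in> \<Omega>) \<and> card \<Omega> \<le> k}"

definition cost :: "nat \<Rightarrow> (bool list \<Rightarrow> real) \<Rightarrow> bool list set \<Rightarrow> real" where
  "cost h x \<Omega> = (\<Sum>w \<in> tree_nodes h - \<Omega>. x w)"

definition subtree_weight :: "nat \<Rightarrow> (bool list \<Rightarrow> real) \<Rightarrow> bool list \<Rightarrow> real" where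
  "subtree_weight h x v = (\<Sum>w \<in> descendants h v. x w)"

definition mth_largest :: "nat \<Rightarrow> real multiset \<Rightarrow> real" where
  "mth_largest m A = rev (sorted_list_of_multiset A) ! (m - 1)"

end

theory Submission
  imports Defs
begin

lemma finite_tree: "finite (tree_nodes h)"
proof -
  have "tree_nodes h \<subseteq> {xs. set xs \<subseteq> (UNIV::bool set) \<and> length xs \<le> h}"
    by (auto simp: tree_nodes_def)
  thus ?thesis using finite_lists_length_le[of "UNIV::bool set" h] finite_subset by auto
qed

lemma parent_closed:
  assumes "\<Omega> \<in> rooted_subtrees h k"
  shows "v @ r \<in> \<Omega> \<Longrightarrow> v \<in> \<Omega>"
proof (induction r rule: rev_induct)
  case Nil thus ?case by simp
next
  case (snoc b r)
  have "(v @ r) @ [b] \<in> \<Omega>" using snoc.prems by simp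
  moreover have "\<forall>v b. v @ [b] \<in> \<Omega> \<longrightarrow> v \<in> \<Omega>" using assms by (simp add: rooted_subtrees_def)
  ultimately have "v @ r \<in> \<Omega>" by blast
  thus ?case using snoc.IH by simp
qed

lemma desc_disjoint:
  assumes "length v = length v'" "v \<noteq> v'"
  shows "descendants h v \<inter> descendants h v' = {}"
  using assms by (auto simp: descendants_def append_eq_append_conv)

lemma sorted_filter_less:
  fixes xs :: "real list"
  assumes "sorted xs" "i < length xs"
  shows "length (filter (\<lambda>y. y < xs ! i) xs) \<le> i"
proof -
  have "filter (\<lambda>y. y < xs ! i) (drop i xs) = []"
  proof -
    have "\<forall>y \<in> set (drop i xs). xs ! i \<le> y"
    proof
      fix y assume "y \<in> set (drop i xs)"
      then obtain j where j: "j < length (drop i xs)" "y = drop i xs ! j"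
        by (auto simp: in_set_conv_nth)
      hence "y = xs ! (i + j)" "i + j < length xs" using assms by auto
      thus "xs ! i \<le> y" using assms(1) sorted_nth_mono by fastforce
    qed
    thus ?thesis by (auto simp: filter_empty_conv)
  qed
  hence "filter (\<lambda>y. y < xs ! i) xs = filter (\<lambda>y. y < xs ! i) (take i xs)"
    by (metis append_Nil2 append_take_drop_id filter_append)
  also have "length \<dots> \<le> length (take i xs)" by (rule length_filter_le)
  finally show ?thesis using assms by simp
qed

theorem mainTheorem8:
  fixes h k K l :: nat and \<epsilon> :: real and x :: "bool list \<Rightarrow> real"
  assumes h_pos: "h \<ge> 1"
    and x_nonneg: "\<forall>v \<in> tree_nodes h. x v \<ge> 0"
    and k_ge: "1 \<le> k" and kK: "k \<le> K"
    and eps_pos: "\<epsilon> > 0"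
    and l_range: "1 \<le> l" "l \<le> h"
    and M_def: "M = nat \<lceil>(1 + \<epsilon>) * real K / \<epsilon>\<rceil>"
    and level_big: "card (level_nodes h l) \<ge> M"
    and u_def: "u = mth_largest M (image_mset (subtree_weight h x) (mset_set (level_nodes h l)))"
    and D_def: "D = {v \<in> level_nodes h l. subtree_weight h x v < u}"
    and Z_def: "Z = (\<Union>v \<in> D. descendants h v)"
    and OPT_def: "OPT = Min (cost h x ` rooted_subtrees h k)"
    and OPTc_def: "OPTc = Min (cost h x ` {\<Omega> \<in> rooted_subtrees h k. \<Omega> \<inter> Z = {}})"
  shows "OPTc \<le> (1 + \<epsilon>) * OPT"
proof -
  define f where "f = subtree_weight h x"
  define L where "L = level_nodes h l"
  define R where "R = rooted_subtrees h k"
  have finT: "finite (tree_nodes h)" by (rule finite_tree)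
  have finL: "finite L" using finT by (auto simp: L_def level_nodes_def)
  have Llen: "\<And>v. v \<in> L \<Longrightarrow> length v = h - l"
    using l_range by (auto simp: L_def level_nodes_def level_def tree_nodes_def)
  have LT: "L \<subseteq> tree_nodes h" by (auto simp: L_def level_nodes_def)
  have descT: "\<And>v. descendants h v \<subseteq> tree_nodes h" by (auto simp: descendants_def)
  have fin_desc: "\<And>v. finite (descendants h v)" using descT finT finite_subset by blast
  have f_nonneg: "\<And>v. f v \<ge> 0"
    unfolding f_def subtree_weight_def using descT x_nonneg by (meson subsetD sum_nonneg)
  have MK: "\<epsilon> * real M \<ge> (1 + \<epsilon>) * real K"
  proof -
    have "real M \<ge> (1 + \<epsilon>) * real K / \<epsilon>"
    proof -
      have y0: "(1 + \<epsilon>) * real K / \<epsilon> \<ge> 0" using eps_pos by simp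
      hence "\<lceil>(1 + \<epsilon>) * real K / \<epsilon>\<rceil> \<ge> 0" by simp
      hence "real M = of_int \<lceil>(1 + \<epsilon>) * real K / \<epsilon>\<rceil>" using M_def by simp
      thus ?thesis by simp
    qed
    thus ?thesis using eps_pos by (simp add: field_simps)
  qed
  have MgtK: "M > K"
  proof -
    have "\<epsilon> * real M \<ge> \<epsilon> * real K + real K" using MK by (simp add: algebra_simps)
    hence "\<epsilon> * real M > \<epsilon> * real K" using k_ge kK by linarith
    hence "real M > real K" using eps_pos by simp
    thus ?thesis by simp
  qed
  define A where "A = image_mset f (mset_set L)"
  define xs where "xs = sorted_list_of_multiset A"
  have lenxs: "length xs = card L"
    by (metis A_def xs_def mset_sorted_list_of_multiset size_image_mset size_mset size_mset_set)
  have Mpos: "M \<ge> 1" using MgtK by simp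
  have u_eq: "u = xs ! (card L - M)"
    using u_def Mpos level_big lenxs
    by (simp add: mth_largest_def A_def[symmetric] f_def[symmetric] L_def[symmetric]
        xs_def[symmetric] rev_nth)
  have u_nonneg: "u \<ge> 0"
  proof -
    have "card L - M < length xs" using lenxs level_big Mpos L_def by simp
    hence "u \<in> set xs" using u_eq by simp
    hence "u \<in> f ` L" using finL by (simp add: xs_def A_def)
    thus ?thesis using f_nonneg by auto
  qed
  have cardD: "card D \<le> card L - M"
  proof -
    have "D = {v \<in> L. f v < u}" using D_def by (simp add: L_def f_def)
    hence "card D = size (filter_mset (\<lambda>y. y < u) A)"
      using finL by (simp add: A_def filter_mset_image_mset)
    also have "\<dots> = length (filter (\<lambda>y. y < u) xs)"
      by (metis xs_def mset_filter mset_sorted_list_of_multiset size_mset)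
    also have "\<dots> \<le> card L - M"
      using u_eq sorted_filter_less[of xs "card L - M"] lenxs level_big Mpos L_def
      by (simp add: xs_def)
    finally show ?thesis .
  qed
  have DL: "D \<subseteq> L" using D_def L_def by auto
  have DLen: "\<And>v. v \<in> D \<Longrightarrow> length v = h - l" using DL Llen by blast
  have finR: "finite R"
    by (rule finite_subset[of _ "Pow (tree_nodes h)"]) (auto simp: R_def rooted_subtrees_def finT)
  have rootR: "{[]} \<in> R" using h_pos k_ge by (auto simp: R_def rooted_subtrees_def tree_nodes_def)
  obtain \<Omega> where \<Omega>R: "\<Omega> \<in> R" and OPT_eq: "OPT = cost h x \<Omega>"
  proof -
    have "Min (cost h x ` R) \<in> cost h x ` R" by (rule Min_in) (use finR rootR in auto)
    thus ?thesis using that OPT_def R_def by auto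
  qed
  have \<Omega>T: "\<Omega> \<subseteq> tree_nodes h" and \<Omega>k: "card \<Omega> \<le> k" and \<Omega>root: "[] \<in> \<Omega>"
    using \<Omega>R by (auto simp: R_def rooted_subtrees_def)
  have fin\<Omega>: "finite \<Omega>" using \<Omega>T finT finite_subset by blast
  have pc: "\<And>v r. v @ r \<in> \<Omega> \<Longrightarrow> v \<in> \<Omega>" using parent_closed \<Omega>R R_def by blast
  define s where "s = card (L \<inter> \<Omega>)"
  have sK: "s \<le> K" using \<Omega>k kK card_mono[OF fin\<Omega>, of "L \<inter> \<Omega>"] s_def by auto
  define \<Omega>' where "\<Omega>' = \<Omega> - Z"
  have root_notZ: "[] \<notin> Z"
  proof
    assume "[] \<in> Z"
    then obtain v where "v \<in> D" "[] \<in> descendants h v" using Z_def by auto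
    hence "v = []" "[] \<in> L" using DL by (auto simp: descendants_def)
    hence "\<And>w. w \<in> L \<Longrightarrow> w = []" using Llen by (metis length_0_conv list.size(3))
    hence "L = {[]}" using \<open>[] \<in> L\<close> by blast
    thus False using level_big MgtK k_ge kK L_def by simp
  qed
  have \<Omega>'R: "\<Omega>' \<in> {\<Omega> \<in> R. \<Omega> \<inter> Z = {}}"
  proof -
    have P1: "\<forall>v b. v @ [b] \<in> \<Omega>' \<longrightarrow> v \<in> \<Omega>'"
    proof (intro allI impI)
      fix v b assume a: "v @ [b] \<in> \<Omega>'"
      hence "v \<in> \<Omega>" using pc \<Omega>'_def by blast
      moreover have "v \<notin> Z"
      proof
        assume "v \<in> Z"
        then obtain d r where "d \<in> D" "v = d @ r" using Z_def by (auto simp: descendants_def)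
        moreover have "v @ [b] \<in> tree_nodes h" using a \<Omega>T \<Omega>'_def by auto
        ultimately have "v @ [b] \<in> Z" using Z_def by (auto simp: descendants_def)
        thus False using a \<Omega>'_def by auto
      qed
      ultimately show "v \<in> \<Omega>'" using \<Omega>'_def by auto
    qed
    have P2: "card \<Omega>' \<le> k" using \<Omega>k card_mono[OF fin\<Omega>, of \<Omega>'] \<Omega>'_def by auto
    have P3: "\<Omega>' \<subseteq> tree_nodes h" using \<Omega>T \<Omega>'_def by blast
    have P4: "[] \<in> \<Omega>'" using \<Omega>root root_notZ \<Omega>'_def by blast
    have P5: "\<Omega>' \<inter> Z = {}" using \<Omega>'_def by blast
    have "\<Omega>' \<in> R" unfolding R_def rooted_subtrees_def mem_Collect_eq
      using P1 P2 P3 P4 by (intro conjI)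
    thus ?thesis using P5 by blast
  qed
  have OPTc_le: "OPTc \<le> cost h x \<Omega>'"
  proof -
    have "finite {\<Omega> \<in> R. \<Omega> \<inter> Z = {}}" using finR by simp
    thus ?thesis using OPTc_def \<Omega>'R R_def by (simp add: Min_le)
  qed
  have up: "cost h x \<Omega>' \<le> cost h x \<Omega> + real s * u"
  proof -
    have split: "tree_nodes h - \<Omega>' = (tree_nodes h - \<Omega>) \<union> (\<Omega> \<inter> Z)"
      using \<Omega>T \<Omega>'_def by auto
    have "cost h x \<Omega>' = cost h x \<Omega> + sum x (\<Omega> \<inter> Z)"
      unfolding cost_def split
      by (rule sum.union_disjoint) (use finT fin\<Omega> in auto)
    moreover have "sum x (\<Omega> \<inter> Z) \<le> real s * u"
    proof -
      have sub: "\<Omega> \<inter> Z \<subseteq> (\<Union>v \<in> D \<inter> \<Omega>. descendants h v)"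
      proof
        fix w assume "w \<in> \<Omega> \<inter> Z"
        then obtain d r where d: "d \<in> D" "w = d @ r" "w \<in> descendants h d" "w \<in> \<Omega>"
          using Z_def by (auto simp: descendants_def)
        hence "d \<in> \<Omega>" using pc by blast
        thus "w \<in> (\<Union>v \<in> D \<inter> \<Omega>. descendants h v)" using d by blast
      qed
      have fin2: "finite (D \<inter> \<Omega>)" using fin\<Omega> by simp
      have "sum x (\<Omega> \<inter> Z) \<le> sum x (\<Union>v \<in> D \<inter> \<Omega>. descendants h v)"
        apply (rule sum_mono2)
        using fin2 fin_desc sub apply auto[2] using descT x_nonneg by blast
      also have "\<dots> = (\<Sum>v \<in> D \<inter> \<Omega>. f v)"
        unfolding f_def subtree_weight_def
        apply (rule sum.UNION_disjoint[OF fin2])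
        using fin_desc apply simp
        using DLen by (intro ballI impI desc_disjoint) auto
      also have "\<dots> \<le> (\<Sum>v \<in> D \<inter> \<Omega>. u)"
        by (rule sum_mono) (use D_def f_def in auto)
      also have "\<dots> = real (card (D \<inter> \<Omega>)) * u" by simp
      also have "\<dots> \<le> real s * u"
        using card_mono[of "L \<inter> \<Omega>" "D \<inter> \<Omega>"] finL DL u_nonneg s_def
        by (intro mult_right_mono) auto
      finally show ?thesis .
    qed
    ultimately show ?thesis by simp
  qed
  have low: "cost h x \<Omega> \<ge> (real M - real s) * u"
  proof -
    define G where "G = L - D - \<Omega>"
    have finG: "finite G" using finL G_def by simp
    have GLen: "\<And>v. v \<in> G \<Longrightarrow> length v = h - l" using G_def Llen by blast
    have cG: "card G \<ge> M - s"
    proof -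
      have "card (L - D) = card L - card D"
        using card_Diff_subset[OF finite_subset[OF DL finL] DL] .
      moreover have "M \<le> card L" using level_big L_def by simp
      ultimately have c1: "card (L - D) \<ge> M" using cardD by linarith
      define Y where "Y = (L - D) \<inter> \<Omega>"
      have eq: "L - D = G \<union> Y" using G_def Y_def by blast
      have "card (G \<union> Y) \<le> card G + card Y" by (rule card_Un_le)
      hence "card (L - D) \<le> card G + card Y" unfolding eq .
      moreover have "card Y \<le> s" unfolding s_def Y_def using finL by (intro card_mono) auto
      ultimately show ?thesis using c1 by linarith
    qed
    have sub: "(\<Union>w \<in> G. descendants h w) \<subseteq> tree_nodes h - \<Omega>"
    proof
      fix w assume "w \<in> (\<Union>w \<in> G. descendants h w)"
      then obtain g r where g: "g \<in> G" "w = g @ r" "w \<in> tree_nodes h"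
        by (auto simp: descendants_def)
      have "w \<notin> \<Omega>"
      proof
        assume "w \<in> \<Omega>" hence "g \<in> \<Omega>" using pc g by blast
        thus False using g G_def by blast
      qed
      thus "w \<in> tree_nodes h - \<Omega>" using g by blast
    qed
    have "(\<Sum>w \<in> G. f w) = sum x (\<Union>w \<in> G. descendants h w)"
      unfolding f_def subtree_weight_def
      apply (rule sum.UNION_disjoint[OF finG, symmetric])
      using fin_desc apply simp
      using GLen by (intro ballI impI desc_disjoint) auto
    also have "\<dots> \<le> cost h x \<Omega>"
      unfolding cost_def apply (rule sum_mono2) using finT sub x_nonneg by auto
    finally have a: "(\<Sum>w \<in> G. f w) \<le> cost h x \<Omega>" .
    have "(\<Sum>w \<in> G. u) \<le> (\<Sum>w \<in> G. f w)"
      by (rule sum_mono) (use G_def D_def L_def f_def in auto)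
    hence "real (card G) * u \<le> cost h x \<Omega>" using a by simp
    moreover have "real M - real s \<le> real (card G)" using cG by linarith
    ultimately show ?thesis using u_nonneg
      by (meson mult_right_mono order_trans)
  qed
  have "real s * u \<le> \<epsilon> * cost h x \<Omega>"
  proof -
    have "(1 + \<epsilon>) * real s \<le> \<epsilon> * real M"
      using MK sK eps_pos by (smt (verit) mult_left_mono of_nat_mono)
    hence "real s \<le> \<epsilon> * (real M - real s)" by (simp add: algebra_simps)
    hence "real s * u \<le> \<epsilon> * (real M - real s) * u" using u_nonneg by (simp add: mult_right_mono)
    also have "\<dots> \<le> \<epsilon> * cost h x \<Omega>" using low eps_pos
      by (metis mult.assoc mult_left_mono less_imp_le)
    finally show ?thesis .
  qed
  thus ?thesis using OPTc_le up OPT_eq by (simp add: algebra_simps)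
qed

end
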